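(* Let $G=(V,E)$ be a strongly connected digraph and $s\in V$. Then every auxiliary graph $G_r$ (for $r$ the root of a subtree $T(r)$ that is not a leaf of $D(s)$) is strongly connected.
   Context: For a digraph $G=(V,E)$ and $s\in V$ with every vertex reachable from $s$: $u$ dominates $w$ in the flow graph $G(s)$ if every path from $s$ to $w$ contains $u$; the dominator tree $D(s)$ is the rooted tree on $V$ with root $s$ in which $u$ is an ancestor of $w$ iff $u$ dominates $w$; $d(w)$ is the parent of $w\neq s$. An edge $(u,w)$ is a bridge of $G(s)$ if every path from $s$ to $w$ contains it (then $u=d(w)$). A vertex $w\neq s$ is marked if $(d(w),w)$ is a bridge. Deleting from $D(s)$ all edges $(d(w),w)$ with $w$ marked decomposes $D(s)$ into subtrees rooted at $s$ or at marked vertices; $T(v)$ is the subtree containing $v$. A vertex $x\in T(r)$ is a boundary vertex of $T(r)$ if $x$ has a marked child in $D(s)$. Auxiliary graph: for a subtree root $r$ that is not a leaf of $D(s)$, $G_r=(V_r,E_r)$ has ordinary vertices $V_r^o$ = the vertices of $T(r)$ and auxiliary vertices $V_r^a$ consisting of: a copy of each marked child $z$ of each boundary vertex $x$ of $T(r)$ (with the edge $(x,z)$ in $E_r$), and, if $r\neq s$, a copy of $d(r)$ (with the edge $(d(r),r)$ in $E_r$). $E_r$ further contains all edges of $E$ with both endpoints in $T(r)$, plus the following shortcut edges, for each $(u,v)\in E$: (a) if $u\in T(r)$ and $v$ is not a descendant of $r$ in $D(s)$, the edge $(u,d(r))$; (b) if $v\in T(r)$ and $u$ is a descendant in $D(s)$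 of a marked child $z$ of a boundary vertex of $T(r)$, the edge $(z,v)$; (c) if $u$ is a descendant in $D(s)$ of a marked child $z$ of a boundary vertex of $T(r)$ and $v$ is not a descendant of $r$ in $D(s)$, the edge $(z,d(r))$. Parallel duplicate edges are not kept. *)

theory Defs
  imports Main
begin

fun walk :: "('a \<times> 'a) set \<Rightarrow> 'a list \<Rightarrow> bool" where
  "walk E [] = False"
| "walk E [x] = True"
| "walk E (x # y # xs) = ((x, y) \<in> E \<and> walk E (y # xs))"

definition path_from_to :: "('a \<times> 'a) set \<Rightarrow> 'a \<Rightarrow> 'a \<Rightarrow> 'a list \<Rightarrow> bool" where
  "path_from_to E x y p \<longleftrightarrow> walk E p \<and> hd p = x \<and> last p = y"

definition edges_of :: "'a list \<Rightarrow> ('a \<times> 'a) set" where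
  "edges_of p = set (zip p (tl p))"

definition strongly_connected :: "'v set \<Rightarrow> ('v \<times> 'v) set \<Rightarrow> bool" where
  "strongly_connected V E \<longleftrightarrow> (\<forall>x\<in>V. \<forall>y\<in>V. (x, y) \<in> E\<^sup>*)"

definition dominates :: "'a set \<Rightarrow> ('a \<times> 'a) set \<Rightarrow> 'a \<Rightarrow> 'a \<Rightarrow> 'a \<Rightarrow> bool" where
  "dominates V E s u w \<longleftrightarrow> u \<in> V \<and> w \<in> V \<and>
     (\<forall>p. path_from_to E s w p \<longrightarrow> u \<in> set p)"

definition idom :: "'a set \<Rightarrow> ('a \<times> 'a) set \<Rightarrow> 'a \<Rightarrow> 'a \<Rightarrow> 'a" where
  "idom V E s w = (THE u. dominates V E s u w \<and> u \<noteq> w \<and>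
      (\<forall>x. dominates V E s x w \<and> x \<noteq> w \<longrightarrow> dominates V E s x u))"

definition bridge :: "'a set \<Rightarrow> ('a \<times> 'a) set \<Rightarrow> 'a \<Rightarrow> 'a \<Rightarrow> 'a \<Rightarrow> bool" where
  "bridge V E s u w \<longleftrightarrow> (u, w) \<in> E \<and> w \<in> V \<and>
     (\<forall>p. path_from_to E s w p \<longrightarrow> (u, w) \<in> edges_of p)"

definition marked :: "'a set \<Rightarrow> ('a \<times> 'a) set \<Rightarrow> 'a \<Rightarrow> 'a \<Rightarrow> bool" where
  "marked V E s w \<longleftrightarrow> w \<in> V \<and> w \<noteq> s \<and> bridge V E s (idom V E s w) w"

text \<open>r is the root of one of the subtrees obtained from D(s) by deleting the edges
  (d(w),w) with w marked.\<close>
definition subtree_root :: "'a set \<Rightarrow> ('a \<times> 'a) set \<Rightarrow> 'a \<Rightarrow> 'a \<Rightarrow> bool" where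
  "subtree_root V E s r \<longleftrightarrow> r \<in> V \<and> (r = s \<or> marked V E s r)"

definition inT :: "'a set \<Rightarrow> ('a \<times> 'a) set \<Rightarrow> 'a \<Rightarrow> 'a \<Rightarrow> 'a \<Rightarrow> bool" where
  "inT V E s r v \<longleftrightarrow> subtree_root V E s r \<and> dominates V E s r v \<and>
     (\<forall>x. marked V E s x \<and> x \<noteq> r \<and> dominates V E s r x \<and> dominates V E s x v \<longrightarrow> False)"

definition marked_child_of_boundary :: "'a set \<Rightarrow> ('a \<times> 'a) set \<Rightarrow> 'a \<Rightarrow> 'a \<Rightarrow> 'a \<Rightarrow> bool" where
  "marked_child_of_boundary V E s r z \<longleftrightarrow> marked V E s z \<and> inT V E s r (idom V E s z)"

definition is_leaf :: "'a set \<Rightarrow> ('a \<times> 'a) set \<Rightarrow> 'a \<Rightarrow> 'a \<Rightarrow> bool" where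
  "is_leaf V E s r \<longleftrightarrow> \<not> (\<exists>w\<in>V. w \<noteq> s \<and> idom V E s w = r)"

text \<open>Auxiliary graph G_r: ordinary vertices are Inl v (v in T(r)), auxiliary vertices
  (copies) are Inr x.\<close>
definition aux_vertices :: "'a set \<Rightarrow> ('a \<times> 'a) set \<Rightarrow> 'a \<Rightarrow> 'a \<Rightarrow> ('a + 'a) set" where
  "aux_vertices V E s r =
     Inl ` {v. inT V E s r v}
     \<union> Inr ` {z. marked_child_of_boundary V E s r z}
     \<union> (if r \<noteq> s then {Inr (idom V E s r)} else {})"

definition aux_edges :: "'a set \<Rightarrow> ('a \<times> 'a) set \<Rightarrow> 'a \<Rightarrow> 'a \<Rightarrow> (('a + 'a) \<times> ('a + 'a)) set" where
  "aux_edges V E s r =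
     {(Inl (idom V E s z), Inr z) | z. marked_child_of_boundary V E s r z}
     \<union> (if r \<noteq> s then {(Inr (idom V E s r), Inl r)} else {})
     \<union> {(Inl u, Inl v) | u v. (u, v) \<in> E \<and> inT V E s r u \<and> inT V E s r v}
     \<union> {(Inl u, Inr (idom V E s r)) | u v. (u, v) \<in> E \<and> inT V E s r u
            \<and> \<not> dominates V E s r v}
     \<union> {(Inr z, Inl v) | z u v. (u, v) \<in> E \<and> inT V E s r v
            \<and> marked_child_of_boundary V E s r z \<and> dominates V E s z u}
     \<union> {(Inr z, Inr (idom V E s r)) | z u v. (u, v) \<in> E
            \<and> marked_child_of_boundary V E s r z \<and> dominates V E s z u
            \<and> \<not> dominates V E s r v}"

end

theory Submission
  imports Defs
begin

lemma walk_nonempty: "walk F p \<Longrightarrow> p \<noteq> []"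
  by (cases p) auto

lemma walk_mono: "walk F p \<Longrightarrow> F \<subseteq> G \<Longrightarrow> walk G p"
  by (induction F p rule: walk.induct) auto

lemma walk_edges: "walk F p \<Longrightarrow> edges_of p \<subseteq> F"
  by (induction F p rule: walk.induct) (auto simp: edges_of_def)

lemma walk_rtrancl: "walk F p \<Longrightarrow> (hd p, last p) \<in> (F \<inter> set p \<times> set p)\<^sup>*"
proof (induction F p rule: walk.induct)
  case (3 F x y xs)
  then have e: "(x,y) \<in> F \<inter> set (x#y#xs) \<times> set (x#y#xs)" by auto
  have "(y, last (y#xs)) \<in> (F \<inter> set (y#xs) \<times> set (y#xs))\<^sup>*" using 3 by auto
  moreover have "(F \<inter> set (y#xs) \<times> set (y#xs)) \<subseteq> F \<inter> set (x#y#xs) \<times> set (x#y#xs)" by auto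
  ultimately have "(y, last (y#xs)) \<in> (F \<inter> set (x#y#xs) \<times> set (x#y#xs))\<^sup>*"
    using rtrancl_mono by blast
  then have "(x, last (y#xs)) \<in> (F \<inter> set (x#y#xs) \<times> set (x#y#xs))\<^sup>*"
    by (rule converse_rtrancl_into_rtrancl[OF e])
  then show ?case by (metis last_ConsR list.discI list.sel(1))
qed auto

lemma rtrancl_walk: "(x,y) \<in> F\<^sup>* \<Longrightarrow> \<exists>p. walk F p \<and> hd p = x \<and> last p = y \<and> set p \<subseteq> insert x (snd ` F)"
proof (induction rule: converse_rtrancl_induct)
  case base
  then show ?case by (rule exI[of _ "[y]"]) auto
next
  case (step x z)
  then obtain p where p: "walk F p" "hd p = z" "last p = y" "set p \<subseteq> insert z (snd ` F)" by blast
  have ne: "p \<noteq> []" using p walk_nonempty by auto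
  then obtain q where q: "p = z # q" using p by (cases p) auto
  have "walk F (x # p)" using p step q by (cases q) auto
  moreover have "set (x#p) \<subseteq> insert x (snd ` F)" using p step by force
  ultimately show ?case using p ne by (intro exI[of _ "x#p"]) auto
qed

lemma Lout: "(a,w) \<in> F\<^sup>* \<Longrightarrow> (a,w) \<in> {(p,q). (p,q) \<in> F \<and> q \<noteq> v}\<^sup>* \<or> (v,w) \<in> {(p,q). (p,q) \<in> F \<and> q \<noteq> v}\<^sup>*"
proof (induction rule: rtrancl_induct)
  case base then show ?case by auto
next
  case (step c d)
  show ?case
  proof (cases "d = v")
    case True then show ?thesis by auto
  next
    case False
    then have "(c,d) \<in> {(p,q). (p,q) \<in> F \<and> q \<noteq> v}" using step by auto
    then show ?thesis using step.IH by (meson rtrancl.rtrancl_into_rtrancl)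
  qed
qed

lemma Lin: "(a,w) \<in> F\<^sup>* \<Longrightarrow> (a,w) \<in> {(p,q). (p,q) \<in> F \<and> p \<noteq> v}\<^sup>* \<or> (a,v) \<in> {(p,q). (p,q) \<in> F \<and> p \<noteq> v}\<^sup>*"
proof (induction rule: rtrancl_induct)
  case base then show ?case by auto
next
  case (step c d)
  show ?case
  proof (cases "(a,v) \<in> {(p,q). (p,q) \<in> F \<and> p \<noteq> v}\<^sup>*")
    case True then show ?thesis by auto
  next
    case False
    then have ac: "(a,c) \<in> {(p,q). (p,q) \<in> F \<and> p \<noteq> v}\<^sup>*" using step.IH by auto
    then have "c \<noteq> v" using False by auto
    then have "(c,d) \<in> {(p,q). (p,q) \<in> F \<and> p \<noteq> v}" using step by auto
    then show ?thesis using ac by (meson rtrancl.rtrancl_into_rtrancl)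
  qed
qed

lemma out_avoid: "(a,w) \<in> {(p,q). (p,q) \<in> F \<and> q \<noteq> v}\<^sup>* \<Longrightarrow> a \<noteq> v \<Longrightarrow> (a,w) \<in> {(p,q). (p,q) \<in> F \<and> p \<noteq> v \<and> q \<noteq> v}\<^sup>*"
proof -
  assume h: "(a,w) \<in> {(p,q). (p,q) \<in> F \<and> q \<noteq> v}\<^sup>*" "a \<noteq> v"
  have "w \<noteq> v \<and> (a,w) \<in> {(p,q). (p,q) \<in> F \<and> p \<noteq> v \<and> q \<noteq> v}\<^sup>*"
    using h(1)
  proof (induction rule: rtrancl_induct)
    case base then show ?case using h(2) by auto
  next
    case (step c d)
    then have cd: "(c,d) \<in> {(p,q). (p,q) \<in> F \<and> p \<noteq> v \<and> q \<noteq> v}" by auto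
    have "(a,c) \<in> {(p,q). (p,q) \<in> F \<and> p \<noteq> v \<and> q \<noteq> v}\<^sup>*" using step by auto
    then show ?case using cd step by (auto intro: rtrancl_into_rtrancl)
  qed
  then show ?thesis by auto
qed

lemma in_avoid: "(a,w) \<in> {(p,q). (p,q) \<in> F \<and> p \<noteq> v}\<^sup>* \<Longrightarrow> w \<noteq> v \<Longrightarrow> (a,w) \<in> {(p,q). (p,q) \<in> F \<and> p \<noteq> v \<and> q \<noteq> v}\<^sup>*"
proof (induction rule: rtrancl_induct)
  case base then show ?case by auto
next
  case (step c d)
  then have cd: "(c,d) \<in> {(p,q). (p,q) \<in> F \<and> p \<noteq> v \<and> q \<noteq> v}" by auto
  have "(a,c) \<in> {(p,q). (p,q) \<in> F \<and> p \<noteq> v \<and> q \<noteq> v}\<^sup>*" using step by auto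
  then show ?case using cd by (rule rtrancl_into_rtrancl)
qed

lemma exit_lemma: "(v,w) \<in> F\<^sup>* \<Longrightarrow> v \<in> D \<Longrightarrow> (v,w) \<in> (F \<inter> D \<times> D)\<^sup>* \<or> (\<exists>a b. (v,a) \<in> (F \<inter> D \<times> D)\<^sup>* \<and> a \<in> D \<and> (a,b) \<in> F \<and> b \<notin> D)"
proof (induction rule: rtrancl_induct)
  case base then show ?case by auto
next
  case (step c d)
  show ?case
  proof (cases "(v,c) \<in> (F \<inter> D \<times> D)\<^sup>*")
    case True
    then have "c \<in> D" using step(4) by (induction rule: rtrancl_induct) auto
    then show ?thesis using True step(2)
      by (cases "d \<in> D") (auto intro: rtrancl_into_rtrancl)
  next
    case False then show ?thesis using step by auto
  qed
qed

locale G =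
  fixes V :: "'a set" and E :: "('a \<times> 'a) set" and s :: 'a
  assumes fin: "finite V" and EV: "E \<subseteq> V \<times> V" and sc: "strongly_connected V E" and sV: "s \<in> V"
begin

abbreviation "dm \<equiv> dominates V E s"

definition av :: "'a \<Rightarrow> ('a \<times> 'a) set" where
  "av u = {(p,q). (p,q) \<in> E \<and> p \<noteq> u \<and> q \<noteq> u}"

lemma reach: "x \<in> V \<Longrightarrow> y \<in> V \<Longrightarrow> (x,y) \<in> E\<^sup>*"
  using sc unfolding strongly_connected_def by auto

lemma dom_iff: "dm u w \<longleftrightarrow> u \<in> V \<and> w \<in> V \<and> (u = s \<or> u = w \<or> (s,w) \<notin> (av u)\<^sup>*)"
proof
  assume d: "dm u w"
  show "u \<in> V \<and> w \<in> V \<and> (u = s \<or> u = w \<or> (s,w) \<notin> (av u)\<^sup>*)"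
  proof (intro conjI)
    show "u \<in> V" "w \<in> V" using d unfolding dominates_def by auto
    show "u = s \<or> u = w \<or> (s,w) \<notin> (av u)\<^sup>*"
    proof (rule ccontr)
      assume "\<not> ?thesis"
      then have h: "u \<noteq> s" "(s,w) \<in> (av u)\<^sup>*" by auto
      then obtain p where p: "walk (av u) p" "hd p = s" "last p = w" "set p \<subseteq> insert s (snd ` av u)"
        using rtrancl_walk[OF h(2)] by blast
      have "u \<notin> set p" using p(4) h(1) unfolding av_def by auto
      moreover have "walk E p" using p(1) walk_mono unfolding av_def by blast
      ultimately show False using d p unfolding dominates_def path_from_to_def by auto
    qed
  qed
next
  assume h: "u \<in> V \<and> w \<in> V \<and> (u = s \<or> u = w \<or> (s,w) \<notin> (av u)\<^sup>*)"
  show "dm u w" unfolding dominates_def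
  proof (intro conjI allI impI)
    show "u \<in> V" "w \<in> V" using h by auto
    fix p assume p: "path_from_to E s w p"
    then have ne: "p \<noteq> []" and wp: "walk E p" using walk_nonempty unfolding path_from_to_def by auto
    show "u \<in> set p"
    proof (rule ccontr)
      assume nu: "u \<notin> set p"
      then have "u \<noteq> s" "u \<noteq> w" using p ne unfolding path_from_to_def
        by (auto simp: hd_in_set last_in_set)
      moreover have "(s,w) \<in> (av u)\<^sup>*"
      proof -
        have "(hd p, last p) \<in> (E \<inter> set p \<times> set p)\<^sup>*" using walk_rtrancl wp by blast
        moreover have "E \<inter> set p \<times> set p \<subseteq> av u" using nu unfolding av_def by auto
        ultimately show ?thesis using p rtrancl_mono unfolding path_from_to_def by blast
      qed
      ultimately show False using h by auto
    qed
  qed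
qed

lemma dom_V: "dm u w \<Longrightarrow> u \<in> V \<and> w \<in> V" unfolding dominates_def by auto
lemma dom_refl: "w \<in> V \<Longrightarrow> dm w w" using dom_iff by auto
lemma dom_s: "w \<in> V \<Longrightarrow> dm s w" using dom_iff sV by auto
lemma dom_to_s: "dm u s \<Longrightarrow> u = s" using dom_iff by auto

lemma av_in: "{(p,q). (p,q) \<in> F \<and> p \<noteq> v \<and> q \<noteq> v} \<subseteq> F" by auto

lemma dom_trans: assumes "dm u v" "dm v w" shows "dm u w"
proof (rule ccontr)
  assume n: "\<not> dm u w"
  have V: "u \<in> V" "v \<in> V" "w \<in> V" using assms dom_V by auto
  then have h: "u \<noteq> s" "u \<noteq> w" "(s,w) \<in> (av u)\<^sup>*" using n dom_iff by auto
  have "v \<noteq> s" using assms(1) h(1) dom_to_s by auto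
  moreover have "v \<noteq> w" using assms n by auto
  moreover have "u \<noteq> v" using assms n by auto
  ultimately have vw: "(s,w) \<notin> (av v)\<^sup>*" using assms(2) dom_iff by auto
  from Lin[OF h(3), of v]
  show False
  proof
    assume "(s,w) \<in> {(p,q). (p,q) \<in> av u \<and> p \<noteq> v}\<^sup>*"
    then have "(s,w) \<in> {(p,q). (p,q) \<in> av u \<and> p \<noteq> v \<and> q \<noteq> v}\<^sup>*" by (rule in_avoid) (use \<open>v \<noteq> w\<close> in auto)
    moreover have "{(p,q). (p,q) \<in> av u \<and> p \<noteq> v \<and> q \<noteq> v} \<subseteq> av v" unfolding av_def by auto
    ultimately show False using vw rtrancl_mono by blast
  next
    assume "(s,v) \<in> {(p,q). (p,q) \<in> av u \<and> p \<noteq> v}\<^sup>*"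
    moreover have "{(p,q). (p,q) \<in> av u \<and> p \<noteq> v} \<subseteq> av u" by auto
    ultimately have "(s,v) \<in> (av u)\<^sup>*" using rtrancl_mono by blast
    then show False using assms(1) dom_iff h \<open>u \<noteq> v\<close> by auto
  qed
qed

lemma dom_antisym: assumes "dm u w" "dm w u" shows "u = w"
proof (rule ccontr)
  assume ne: "u \<noteq> w"
  have V: "u \<in> V" "w \<in> V" using assms dom_V by auto
  have "u \<noteq> s" using assms(2) dom_to_s ne by auto
  moreover have "w \<noteq> s" using assms(1) dom_to_s ne by auto
  ultimately have h: "(s,w) \<notin> (av u)\<^sup>*" "(s,u) \<notin> (av w)\<^sup>*" using assms dom_iff ne by auto
  have sw: "(s,w) \<in> E\<^sup>*" using reach sV V by auto
  from Lin[OF sw, of u] show False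
  proof
    assume "(s,w) \<in> {(p,q). (p,q) \<in> E \<and> p \<noteq> u}\<^sup>*"
    from in_avoid[OF this] have "(s,w) \<in> (av u)\<^sup>*" using ne unfolding av_def by auto
    then show False using h by auto
  next
    assume a: "(s,u) \<in> {(p,q). (p,q) \<in> E \<and> p \<noteq> u}\<^sup>*"
    from Lin[OF a, of w] show False
    proof
      assume "(s,u) \<in> {(p,q). (p,q) \<in> {(p,q). (p,q) \<in> E \<and> p \<noteq> u} \<and> p \<noteq> w}\<^sup>*"
      then have "(s,u) \<in> {(p,q). (p,q) \<in> {(p,q). (p,q) \<in> E \<and> p \<noteq> u} \<and> p \<noteq> w \<and> q \<noteq> w}\<^sup>*"
        by (rule in_avoid) (use ne in auto)
      moreover have "{(p,q). (p,q) \<in> {(p,q). (p,q) \<in> E \<and> p \<noteq> u} \<and> p \<noteq> w \<and> q \<noteq> w} \<subseteq> av w"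
        unfolding av_def by auto
      ultimately show False using h rtrancl_mono by blast
    next
      assume "(s,w) \<in> {(p,q). (p,q) \<in> {(p,q). (p,q) \<in> E \<and> p \<noteq> u} \<and> p \<noteq> w}\<^sup>*"
      moreover have "{(p,q). (p,q) \<in> {(p,q). (p,q) \<in> E \<and> p \<noteq> u} \<and> p \<noteq> w} \<subseteq> {(p,q). (p,q) \<in> E \<and> p \<noteq> u}"
        by auto
      ultimately have "(s,w) \<in> {(p,q). (p,q) \<in> E \<and> p \<noteq> u}\<^sup>*" using rtrancl_mono by blast
      from in_avoid[OF this] have "(s,w) \<in> (av u)\<^sup>*" using ne unfolding av_def by auto
      then show False using h by auto
    qed
  qed
qed

lemma dom_linear: assumes "dm x w" "dm y w" shows "dm x y \<or> dm y x"
proof (rule ccontr)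
  assume n: "\<not> (dm x y \<or> dm y x)"
  have V: "x \<in> V" "y \<in> V" "w \<in> V" using assms dom_V by auto
  have xw: "x \<noteq> w" using n assms by auto
  have yw: "y \<noteq> w" using n assms by auto
  have hx: "x \<noteq> s" "x \<noteq> y" "(s,y) \<in> (av x)\<^sup>*" using n dom_iff V by auto
  have hy: "y \<noteq> s" "(s,x) \<in> (av y)\<^sup>*" using n dom_iff V by auto
  have wx: "(s,w) \<notin> (av x)\<^sup>*" using assms(1) dom_iff hx xw by auto
  have wy: "(s,w) \<notin> (av y)\<^sup>*" using assms(2) dom_iff hy xw yw by auto
  have yw': "(y,w) \<in> E\<^sup>*" using reach V by auto
  from Lout[OF yw', of y] have a: "(y,w) \<in> {(p,q). (p,q) \<in> E \<and> q \<noteq> y}\<^sup>*" by auto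
  from Lout[OF a, of x] show False
  proof
    assume "(y,w) \<in> {(p,q). (p,q) \<in> {(p,q). (p,q) \<in> E \<and> q \<noteq> y} \<and> q \<noteq> x}\<^sup>*"
    then have "(y,w) \<in> {(p,q). (p,q) \<in> {(p,q). (p,q) \<in> E \<and> q \<noteq> y} \<and> p \<noteq> x \<and> q \<noteq> x}\<^sup>*"
      by (rule out_avoid) (use hx(2) in auto)
    moreover have "{(p,q). (p,q) \<in> {(p,q). (p,q) \<in> E \<and> q \<noteq> y} \<and> p \<noteq> x \<and> q \<noteq> x} \<subseteq> av x"
      unfolding av_def by auto
    ultimately have "(y,w) \<in> (av x)\<^sup>*" using rtrancl_mono by blast
    then show False using hx wx by (meson rtrancl_trans)
  next
    assume "(x,w) \<in> {(p,q). (p,q) \<in> {(p,q). (p,q) \<in> E \<and> q \<noteq> y} \<and> q \<noteq> x}\<^sup>*"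
    moreover have "{(p,q). (p,q) \<in> {(p,q). (p,q) \<in> E \<and> q \<noteq> y} \<and> q \<noteq> x} \<subseteq> {(p,q). (p,q) \<in> E \<and> q \<noteq> y}"
      by auto
    ultimately have "(x,w) \<in> {(p,q). (p,q) \<in> E \<and> q \<noteq> y}\<^sup>*" using rtrancl_mono by blast
    from out_avoid[OF this] have "(x,w) \<in> (av y)\<^sup>*" using hx(2) unfolding av_def by auto
    then show False using hy wy by (meson rtrancl_trans)
  qed
qed

end

context G begin

abbreviation "mk \<equiv> marked V E s"
abbreviation "dd \<equiv> idom V E s"

lemma bridge_rt: "bridge V E s u w \<Longrightarrow> (s,w) \<notin> (E - {(u,w)})\<^sup>*"
proof
  assume b: "bridge V E s u w" and r: "(s,w) \<in> (E - {(u,w)})\<^sup>*"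
  obtain p where p: "walk (E - {(u,w)}) p" "hd p = s" "last p = w"
    using rtrancl_walk[OF r] by blast
  have "walk E p" using p(1) walk_mono by blast
  then have "(u,w) \<in> edges_of p" using b p unfolding bridge_def path_from_to_def by auto
  then show False using walk_edges[OF p(1)] by auto
qed

lemma marked_facts: assumes "mk z"
  shows "z \<noteq> s" "z \<in> V" "(dd z, z) \<in> E" "dd z \<in> V" "(s,z) \<notin> (E - {(dd z,z)})\<^sup>*"
    "dd z \<noteq> z" "dm (dd z) z"
proof -
  have b: "bridge V E s (dd z) z" and zs: "z \<noteq> s" using assms unfolding marked_def by auto
  show "z \<noteq> s" by fact
  show e: "(dd z, z) \<in> E" using b unfolding bridge_def by auto
  then show "z \<in> V" "dd z \<in> V" using EV by auto
  show nr: "(s,z) \<notin> (E - {(dd z,z)})\<^sup>*" using bridge_rt[OF b] .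
  show ne: "dd z \<noteq> z"
  proof
    assume "dd z = z"
    then have "E - Id \<subseteq> E - {(dd z, z)}" by auto
    moreover have "(s,z) \<in> (E - Id)\<^sup>*" using reach[OF sV \<open>z \<in> V\<close>] rtrancl_r_diff_Id[of E] by simp
    ultimately show False using nr rtrancl_mono by blast
  qed
  show "dm (dd z) z" unfolding dom_iff
  proof (intro conjI)
    show "dd z \<in> V" "z \<in> V" using e EV by auto
    show "dd z = s \<or> dd z = z \<or> (s, z) \<notin> (av (dd z))\<^sup>*"
    proof -
      have "av (dd z) \<subseteq> E - {(dd z, z)}" unfolding av_def by auto
      then show ?thesis using nr rtrancl_mono by blast
    qed
  qed
qed

lemma marked_M3: assumes "mk z" "dm x z" "x \<noteq> z" shows "dm x (dd z)"
proof (rule ccontr)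
  assume n: "\<not> dm x (dd z)"
  have V: "x \<in> V" "dd z \<in> V" using assms dom_V marked_facts by auto
  then have h: "x \<noteq> s" "x \<noteq> dd z" "(s, dd z) \<in> (av x)\<^sup>*" using n dom_iff by auto
  have "(dd z, z) \<in> av x" using marked_facts[OF assms(1)] h assms(3) unfolding av_def by auto
  with h(3) have "(s,z) \<in> (av x)\<^sup>*" by (rule rtrancl_into_rtrancl)
  then show False using assms(2,3) h dom_iff by auto
qed

lemma marked_M4: assumes "mk z" "(a,b) \<in> E" "dm z b" "\<not> dm z a" shows "a = dd z \<and> b = z"
proof -
  have V: "a \<in> V" "b \<in> V" "z \<in> V" using assms EV marked_facts by auto
  then have h: "z \<noteq> s" "z \<noteq> a" "(s,a) \<in> (av z)\<^sup>*" using assms(4) dom_iff by auto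
  have bz: "b = z"
  proof (rule ccontr)
    assume "b \<noteq> z"
    then have "(a,b) \<in> av z" using h assms(2) unfolding av_def by auto
    with h(3) have "(s,b) \<in> (av z)\<^sup>*" by (rule rtrancl_into_rtrancl)
    then show False using assms(3) h \<open>b \<noteq> z\<close> dom_iff by auto
  qed
  have "a = dd z"
  proof (rule ccontr)
    assume "a \<noteq> dd z"
    have "av z \<subseteq> E - {(dd z, z)}" unfolding av_def by auto
    then have "(s,a) \<in> (E - {(dd z, z)})\<^sup>*" using h rtrancl_mono by blast
    moreover have "(a,z) \<in> E - {(dd z, z)}" using assms(2) bz \<open>a \<noteq> dd z\<close> by auto
    ultimately have "(s,z) \<in> (E - {(dd z, z)})\<^sup>*" by (rule rtrancl_into_rtrancl)
    then show False using marked_facts[OF assms(1)] by auto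
  qed
  then show ?thesis using bz by auto
qed

end

context G begin

abbreviation "sr r \<equiv> subtree_root V E s r"
abbreviation "iT r v \<equiv> inT V E s r v"
abbreviation "mcb r z \<equiv> marked_child_of_boundary V E s r z"

lemma inT_dom: "iT r v \<Longrightarrow> dm r v" unfolding inT_def by auto

lemma sr_V: "sr r \<Longrightarrow> r \<in> V" unfolding subtree_root_def by auto

lemma r_in_T: assumes "sr r" shows "iT r r"
  unfolding inT_def using assms sr_V dom_refl dom_antisym by blast

lemma mc_facts: assumes "mcb r z"
  shows "mk z" "z \<noteq> r" "dm r z" "dm r (dd z)" "iT r (dd z)"
proof -
  show mz: "mk z" "iT r (dd z)" using assms unfolding marked_child_of_boundary_def by auto
  then show rd: "dm r (dd z)" using inT_dom by auto
  show rz: "dm r z" using dom_trans[OF rd marked_facts(7)[OF mz(1)]] .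
  show "z \<noteq> r"
  proof
    assume "z = r"
    then have "dd z = z" using dom_antisym[OF marked_facts(7)[OF mz(1)]] rd by auto
    then show False using marked_facts(6)[OF mz(1)] by auto
  qed
qed

lemma mc_notT: assumes "mcb r z" "dm z w" shows "\<not> iT r w"
proof
  assume "iT r w"
  then show False using mc_facts[OF assms(1)] assms(2) unfolding inT_def by blast
qed

lemma phi1: assumes "sr r" "dm r w" "\<not> iT r w" shows "\<exists>z. mcb r z \<and> dm z w"
proof -
  let ?P = "\<lambda>x. mk x \<and> x \<noteq> r \<and> dm r x \<and> dm x w"
  obtain x where "?P x" using assms unfolding inT_def by blast
  let ?m = "\<lambda>x. card {y. dm y x}"
  obtain z where z: "?P z" and zmin: "\<And>y. ?P y \<Longrightarrow> ?m z \<le> ?m y"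
    using ex_has_least_nat[of ?P x ?m] \<open>?P x\<close> by blast
  have "mcb r z" unfolding marked_child_of_boundary_def inT_def
  proof (intro conjI allI impI)
    show "mk z" "sr r" using z assms by auto
    show rd: "dm r (dd z)" using marked_M3 z by auto
    fix y assume y: "mk y \<and> y \<noteq> r \<and> dm r y \<and> dm y (dd z)"
    have mz: "mk z" using z by auto
    have yz: "dm y z" using dom_trans y marked_facts(7)[OF mz] by blast
    have yw: "dm y w" using dom_trans yz z by blast
    have Py: "?P y" using y yw by auto
    have ynz: "y \<noteq> z"
    proof
      assume "y = z"
      then have "dd z = z" using dom_antisym y marked_facts(7)[OF mz] by auto
      then show False using marked_facts(6)[OF mz] by auto
    qed
    have sub: "{y'. dm y' y} \<subset> {y'. dm y' z}"
    proof
      show "{y'. dm y' y} \<subseteq> {y'. dm y' z}" using dom_trans yz by blast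
      have "z \<notin> {y'. dm y' y}" using dom_antisym yz ynz by auto
      moreover have "z \<in> {y'. dm y' z}" using dom_refl marked_facts(2)[OF mz] by auto
      ultimately show "{y'. dm y' y} \<noteq> {y'. dm y' z}" by auto
    qed
    have "finite {y'. dm y' z}" using fin dom_V by (auto intro: finite_subset)
    then have "?m y < ?m z" using sub psubset_card_mono by blast
    then show False using zmin[OF Py] by auto
  qed
  then show ?thesis using z by auto
qed

lemma phi2: assumes "mcb r z" "mcb r z'" "dm z w" "dm z' w" shows "z = z'"
proof (rule ccontr)
  assume ne: "z \<noteq> z'"
  have key: "\<And>a b. mcb r a \<Longrightarrow> mcb r b \<Longrightarrow> a \<noteq> b \<Longrightarrow> dm a b \<Longrightarrow> False"
  proof -
    fix a b assume a: "mcb r a" and b: "mcb r b" and ab: "a \<noteq> b" "dm a b"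
    have "dm a (dd b)" using marked_M3 mc_facts(1)[OF b] ab by auto
    moreover have "iT r (dd b)" using mc_facts(5)[OF b] .
    ultimately show False using mc_facts[OF a] unfolding inT_def by blast
  qed
  from dom_linear[OF assms(3,4)] show False
    using key assms(1,2) ne by metis
qed

definition phi :: "'a \<Rightarrow> 'a \<Rightarrow> 'a + 'a" where
  "phi r w = (if iT r w then Inl w else Inr (SOME z. mcb r z \<and> dm z w))"

lemma phi_Inr: assumes "sr r" "dm r w" "\<not> iT r w" "mcb r z" "dm z w" shows "phi r w = Inr z"
proof -
  obtain z0 where "mcb r z0 \<and> dm z0 w" using phi1 assms by blast
  then have "mcb r (SOME z. mcb r z \<and> dm z w) \<and> dm (SOME z. mcb r z \<and> dm z w) w" by (rule someI)
  then have "(SOME z. mcb r z \<and> dm z w) = z" using phi2 assms by blast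
  then show ?thesis unfolding phi_def using assms by auto
qed

lemma phi_cases: assumes "sr r" "dm r w"
  shows "(iT r w \<and> phi r w = Inl w) \<or> (\<exists>z. \<not> iT r w \<and> mcb r z \<and> dm z w \<and> phi r w = Inr z)"
proof (cases "iT r w")
  case True then show ?thesis unfolding phi_def by auto
next
  case False
  then obtain z where "mcb r z" "dm z w" using phi1 assms by blast
  then show ?thesis using phi_Inr assms False by blast
qed

end

context G begin

abbreviation "AE r \<equiv> aux_edges V E s r"

lemma edge_map: assumes "sr r" "(a,b) \<in> E" "dm r a" "dm r b"
  shows "(phi r a, phi r b) \<in> (AE r)\<^sup>*"
proof -
  have aV: "a \<in> V" using assms EV by auto
  from phi_cases[OF assms(1,3)] phi_cases[OF assms(1,4)] show ?thesis
  proof (elim disjE exE conjE)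
    assume "iT r a" "phi r a = Inl a" "iT r b" "phi r b = Inl b"
    then have "(phi r a, phi r b) \<in> AE r" using assms unfolding aux_edges_def by blast
    then show ?thesis by auto
  next
    fix z assume a: "iT r a" "phi r a = Inl a" and b: "\<not> iT r b" "mcb r z" "dm z b" "phi r b = Inr z"
    have "\<not> dm z a" using mc_notT b a by blast
    then have "a = dd z \<and> b = z" using marked_M4 mc_facts(1)[OF b(2)] assms b by blast
    then have "(phi r a, phi r b) \<in> AE r" using a b unfolding aux_edges_def by blast
    then show ?thesis by auto
  next
    fix z assume a: "\<not> iT r a" "mcb r z" "dm z a" "phi r a = Inr z" and b: "iT r b" "phi r b = Inl b"
    have "(Inr z, Inl b) \<in> AE r" unfolding aux_edges_def using a b assms(2) by blast
    then show ?thesis using a b by auto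
  next
    fix z z' assume a: "\<not> iT r a" "mcb r z" "dm z a" "phi r a = Inr z"
      and b: "\<not> iT r b" "mcb r z'" "dm z' b" "phi r b = Inr z'"
    show ?thesis
    proof (cases "dm z b")
      case True
      then have "z = z'" using phi2 a b by blast
      then show ?thesis using a b by auto
    next
      case False
      have "\<not> dm z' a"
      proof
        assume "dm z' a"
        then have "z = z'" using phi2 a b by blast
        then show False using False b by auto
      qed
      then have "a = dd z'" using marked_M4 mc_facts(1)[OF b(2)] assms b by blast
      then have "iT r a" using mc_facts(5)[OF b(2)] by simp
      then show ?thesis using a by auto
    qed
  qed
qed

lemma exit_map: assumes "sr r" "(a,b) \<in> E" "dm r a" "\<not> dm r b"
  shows "(phi r a, Inr (dd r)) \<in> AE r"
  using phi_cases[OF assms(1,3)]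
proof (elim disjE exE conjE)
  assume "iT r a" "phi r a = Inl a"
  then show ?thesis using assms unfolding aux_edges_def by blast
next
  fix z assume "\<not> iT r a" "mcb r z" "dm z a" "phi r a = Inr z"
  then show ?thesis using assms unfolding aux_edges_def by blast
qed

lemma walk_map: assumes "sr r" "(x,y) \<in> (E \<inter> {v. dm r v} \<times> {v. dm r v})\<^sup>*"
  shows "(phi r x, phi r y) \<in> (AE r)\<^sup>*"
  using assms(2)
proof (induction rule: rtrancl_induct)
  case base then show ?case by auto
next
  case (step c d)
  then have "(phi r c, phi r d) \<in> (AE r)\<^sup>*" using edge_map assms(1) by blast
  then show ?case using step by (meson rtrancl_trans)
qed

lemma inside: assumes "sr r" "dm r v" shows "(r,v) \<in> (E \<inter> {v. dm r v} \<times> {v. dm r v})\<^sup>*"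
proof (cases "r = s")
  case True
  have "E \<inter> {v. dm r v} \<times> {v. dm r v} = E" using EV True dom_s by auto
  then show ?thesis using reach True sV dom_V assms by auto
next
  case rs: False
  let ?D = "{v. dm r v}"
  let ?F = "{(p,q). (p,q) \<in> E \<and> q \<noteq> r}"
  have rV: "r \<in> V" "v \<in> V" using assms dom_V by auto
  show ?thesis
  proof (cases "v = r")
    case True then show ?thesis by auto
  next
    case vr: False
    have avr: "\<And>x. (x,v) \<in> ?F\<^sup>* \<Longrightarrow> x \<noteq> r \<Longrightarrow> dm r x"
    proof (rule ccontr)
      fix x assume x: "(x,v) \<in> ?F\<^sup>*" "x \<noteq> r" "\<not> dm r x"
      have "(x,v) \<in> {(p,q). (p,q) \<in> E \<and> p \<noteq> r \<and> q \<noteq> r}\<^sup>*" by (rule out_avoid[OF x(1) x(2)])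
      then have xv: "(x,v) \<in> (av r)\<^sup>*" unfolding av_def .
      have "x \<in> V"
        using x(1) EV rV(2) by (induction rule: converse_rtrancl_induct) auto
      then have "(s,x) \<in> (av r)\<^sup>*" using x dom_iff rV rs by auto
      then have "(s,v) \<in> (av r)\<^sup>*" using xv by (rule rtrancl_trans)
      then show False using assms(2) dom_iff rs vr by auto
    qed
    have sv: "(s,v) \<in> E\<^sup>*" using reach sV rV by auto
    from Lout[OF sv, of r] show ?thesis
    proof
      assume "(s,v) \<in> ?F\<^sup>*"
      from avr[OF this] rs have "dm r s" by auto
      then show ?thesis using rs dom_to_s by auto
    next
      assume rv: "(r,v) \<in> ?F\<^sup>*"
      have "\<And>x. (x,v) \<in> ?F\<^sup>* \<Longrightarrow> x \<in> ?D \<and> (x,v) \<in> (E \<inter> ?D \<times> ?D)\<^sup>*"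
      proof -
        fix x assume "(x,v) \<in> ?F\<^sup>*"
        then show "x \<in> ?D \<and> (x,v) \<in> (E \<inter> ?D \<times> ?D)\<^sup>*"
        proof (induction rule: converse_rtrancl_induct)
          case base then show ?case using assms by auto
        next
          case (step x y)
          have xv: "(x,v) \<in> ?F\<^sup>*" using step(1,2) by (rule converse_rtrancl_into_rtrancl)
          have "x \<in> ?D"
          proof (cases "x = r")
            case True then show ?thesis using dom_refl rV by auto
          next
            case False then show ?thesis using avr xv by auto
          qed
          then have "(x,y) \<in> E \<inter> ?D \<times> ?D" using step by auto
          moreover have "(y,v) \<in> (E \<inter> ?D \<times> ?D)\<^sup>*" using step(3) by auto
          ultimately show ?case using \<open>x \<in> ?D\<close> by (auto intro: converse_rtrancl_into_rtrancl)
        qed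
      qed
      from this[OF rv] show ?thesis by auto
    qed
  qed
qed

end

context G begin

lemma main: assumes "sr r" shows "strongly_connected (aux_vertices V E s r) (AE r)"
proof -
  let ?D = "{v. dm r v}"
  have rV: "r \<in> V" using assms sr_V by auto
  have phir: "phi r r = Inl r" using r_in_T[OF assms] unfolding phi_def by auto
  have bk: "r \<noteq> s \<Longrightarrow> (Inr (dd r), Inl r) \<in> AE r" unfolding aux_edges_def by auto
  have from_r: "\<And>w. dm r w \<Longrightarrow> (Inl r, phi r w) \<in> (AE r)\<^sup>*"
    using walk_map[OF assms inside[OF assms]] phir by metis
  have to_r: "\<And>w. dm r w \<Longrightarrow> (phi r w, Inl r) \<in> (AE r)\<^sup>*"
  proof -
    fix w assume w: "dm r w"
    have "(w,r) \<in> E\<^sup>*" using reach rV dom_V w by auto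
    moreover have "w \<in> ?D" using w by simp
    ultimately have ex: "(w,r) \<in> (E \<inter> ?D \<times> ?D)\<^sup>* \<or> (\<exists>a b. (w,a) \<in> (E \<inter> ?D \<times> ?D)\<^sup>* \<and> a \<in> ?D \<and> (a,b) \<in> E \<and> b \<notin> ?D)"
      by (rule exit_lemma)
    from ex
    show "(phi r w, Inl r) \<in> (AE r)\<^sup>*"
    proof (elim disjE exE conjE)
      assume "(w,r) \<in> (E \<inter> ?D \<times> ?D)\<^sup>*"
      from walk_map[OF assms this] phir show ?thesis by simp
    next
      fix a b assume a: "(w,a) \<in> (E \<inter> ?D \<times> ?D)\<^sup>*" "a \<in> ?D" "(a,b) \<in> E" "b \<notin> ?D"
      have bV: "b \<in> V" using a EV by auto
      then have rs: "r \<noteq> s" using a dom_s by auto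
      have "(phi r w, phi r a) \<in> (AE r)\<^sup>*" using walk_map[OF assms a(1)] .
      moreover have "(phi r a, Inr (dd r)) \<in> AE r" using exit_map[OF assms a(3)] a by auto
      ultimately show ?thesis using bk[OF rs] by (meson rtrancl.rtrancl_into_rtrancl)
    qed
  qed
  have both: "\<And>x. x \<in> aux_vertices V E s r \<Longrightarrow> (Inl r, x) \<in> (AE r)\<^sup>* \<and> (x, Inl r) \<in> (AE r)\<^sup>*"
  proof -
    fix x assume x: "x \<in> aux_vertices V E s r"
    have ex: "\<exists>w. dm r w \<and> x = phi r w" if "x \<noteq> Inr (dd r) \<or> r = s"
    proof -
      from x that consider (a) v where "iT r v" "x = Inl v" | (b) z where "mcb r z" "x = Inr z"
        unfolding aux_vertices_def by (auto split: if_splits)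
      then show ?thesis
      proof cases
        case a then show ?thesis using inT_dom unfolding phi_def by auto
      next
        case b
        have zV: "z \<in> V" using marked_facts(2) mc_facts(1) b by blast
        have "phi r z = Inr z"
          using phi_Inr[OF assms mc_facts(3)[OF b(1)] mc_notT[OF b(1) dom_refl[OF zV]] b(1) dom_refl[OF zV]] .
        then show ?thesis using b mc_facts(3) by metis
      qed
    qed
    show "(Inl r, x) \<in> (AE r)\<^sup>* \<and> (x, Inl r) \<in> (AE r)\<^sup>*"
    proof (cases "x = Inr (dd r) \<and> r \<noteq> s")
      case False
      then obtain w where "dm r w" "x = phi r w" using ex by blast
      then show ?thesis using from_r to_r by auto
    next
      case True
      then have rs: "r \<noteq> s" and xe: "x = Inr (dd r)" by auto
      have "(r,s) \<in> E\<^sup>*" using reach rV sV by auto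
      moreover have "r \<in> ?D" using dom_refl rV by simp
      ultimately have ex: "(r,s) \<in> (E \<inter> ?D \<times> ?D)\<^sup>* \<or> (\<exists>a b. (r,a) \<in> (E \<inter> ?D \<times> ?D)\<^sup>* \<and> a \<in> ?D \<and> (a,b) \<in> E \<and> b \<notin> ?D)"
        by (rule exit_lemma)
      from ex have "(Inl r, x) \<in> (AE r)\<^sup>*"
      proof (elim disjE exE conjE)
        assume "(r,s) \<in> (E \<inter> ?D \<times> ?D)\<^sup>*"
        then have "s \<in> ?D" using rs by (cases rule: rtranclE) auto
        then show ?thesis using rs dom_to_s by auto
      next
        fix a b assume a: "(r,a) \<in> (E \<inter> ?D \<times> ?D)\<^sup>*" "a \<in> ?D" "(a,b) \<in> E" "b \<notin> ?D"
        have "(phi r r, phi r a) \<in> (AE r)\<^sup>*" using walk_map[OF assms a(1)] .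
        moreover have "(phi r a, Inr (dd r)) \<in> AE r" using exit_map[OF assms a(3)] a by auto
        ultimately show ?thesis using phir xe by (metis rtrancl.rtrancl_into_rtrancl)
      qed
      moreover have "(x, Inl r) \<in> (AE r)\<^sup>*" using bk[OF rs] xe by auto
      ultimately show ?thesis by auto
    qed
  qed
  show ?thesis unfolding strongly_connected_def
    using both by (meson rtrancl_trans)
qed

end

theorem mainTheorem9:
  fixes V :: "'a set" and E :: "('a \<times> 'a) set" and s r :: 'a
  assumes "finite V" and "E \<subseteq> V \<times> V"
    and "strongly_connected V E"
    and "s \<in> V"
    and "subtree_root V E s r"
    and "\<not> is_leaf V E s r"
  shows "strongly_connected (aux_vertices V E s r) (aux_edges V E s r)"
proof -
  interpret G V E s using assms by unfold_locales
  show ?thesis using main assms(5) by blast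
qed

end
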